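(* For $2\le n\le l\le\infty$, the quotient morphism of dg algebras $\Phi_{l,n}\colon\mathcal C_l\to\mathcal C_n$ is a quasi-isomorphism, i.e. it induces an isomorphism on cohomology with respect to $\delta_0$ in every bidegree.
   Context: $R$ is a commutative unital ring. $\mathcal C_\infty=R\langle d_1,d_2,\dots\rangle$ is the free bigraded associative unital $R$-algebra on generators $d_i$ ($i\ge1$) of bidegree $(-i,1-i)$. For $k\ge1$ let $S_k=\sum_{i+j=k,\ i,j\ge1}(-1)^{i+1}d_id_j$ (so $S_1=0$). $\delta_0$ is the unique derivation of bidegree $(0,1)$ with $\delta_0(d_i)=S_i$ for all $i\ge1$, satisfying the graded Leibniz rule $\delta_0(xy)=\delta_0(x)y+(-1)^{x_2}x\delta_0(y)$ for $x$ of bidegree $(x_1,x_2)$; it satisfies $\delta_0^2=0$. For $n\ge1$, $I_n$ is the two-sided ideal generated by $S_k$ and $d_k$ for all $k\ge n$ (it is $\delta_0$-stable), $I_\infty=0$, and $\mathcal C_n=(\mathcal C_\infty/I_n,\delta_0)$. For $1\le n\le l\le\infty$, $I_l\subseteq I_n$ and $\Phi_{l,n}\colon\mathcal C_l\to\mathcal C_n$ is the induced surjection. *)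

theory Defs
  imports Main "HOL-Library.Extended_Nat"
begin

text \<open>Elements of the free algebra C_infinity = R<d_1,d_2,...> are represented as
  coefficient functions on words; a word is a list of generator indices
  (the list [i1,...,ik] stands for the monomial d_i1 ... d_ik).\<close>

type_synonym 'r fa = "nat list \<Rightarrow> 'r"

definition Cinf :: "('r::comm_ring_1) fa set" where
  "Cinf = {x. finite {w. x w \<noteq> 0} \<and> (\<forall>w. x w \<noteq> 0 \<longrightarrow> 0 \<notin> set w)}"

definition fzero :: "('r::comm_ring_1) fa" where
  "fzero = (\<lambda>_. 0)"

definition fadd :: "('r::comm_ring_1) fa \<Rightarrow> 'r fa \<Rightarrow> 'r fa" where
  "fadd x y = (\<lambda>w. x w + y w)"

definition fdiff :: "('r::comm_ring_1) fa \<Rightarrow> 'r fa \<Rightarrow> 'r fa" where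
  "fdiff x y = (\<lambda>w. x w - y w)"

definition fmult :: "('r::comm_ring_1) fa \<Rightarrow> 'r fa \<Rightarrow> 'r fa" where
  "fmult x y = (\<lambda>w. \<Sum>k\<le>length w. x (take k w) * y (drop k w))"

text \<open>Bidegree of a monomial: d_i has bidegree (-i, 1-i).\<close>
definition bideg :: "nat list \<Rightarrow> int \<times> int" where
  "bideg w = (- int (sum_list w), int (length w) - int (sum_list w))"

definition hom :: "int \<Rightarrow> int \<Rightarrow> ('r::comm_ring_1) fa set" where
  "hom p q = {x \<in> Cinf. \<forall>w. x w \<noteq> 0 \<longrightarrow> bideg w = (p, q)}"

definition dgen :: "nat \<Rightarrow> ('r::comm_ring_1) fa" where
  "dgen k = (\<lambda>w. if w = [k] then 1 else 0)"

definition Sel :: "nat \<Rightarrow> ('r::comm_ring_1) fa" where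
  "Sel k = (\<lambda>w. \<Sum>i\<in>{1..<k}. if w = [i, k - i] then (-1) ^ (i + 1) else 0)"

text \<open>delta_0 applied to a monomial u = d_{u!0} ... d_{u!(m-1)}, via the graded Leibniz rule:
  delta_0(u) = sum_j (-1)^(second degree of the prefix) prefix * S_{u!j} * suffix,
  where the second degree of d_i is 1 - i (same parity as 1 + i).\<close>
definition delta_word :: "nat list \<Rightarrow> ('r::comm_ring_1) fa" where
  "delta_word u = (\<lambda>w. \<Sum>j<length u. \<Sum>a\<in>{1..<u!j}.
      if w = take j u @ [a, u!j - a] @ drop (Suc j) u
      then (-1) ^ (\<Sum>m<j. Suc (u!m)) * (-1) ^ (a + 1) else 0)"

definition delta0 :: "('r::comm_ring_1) fa \<Rightarrow> 'r fa" where
  "delta0 x = (\<lambda>w. \<Sum>u\<in>{u. x u \<noteq> 0}. x u * delta_word u w)"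

inductive_set ideal_of :: "('r::comm_ring_1) fa set \<Rightarrow> 'r fa set" for G where
  ideal_zero: "fzero \<in> ideal_of G"
| ideal_gen: "g \<in> G \<Longrightarrow> g \<in> ideal_of G"
| ideal_add: "x \<in> ideal_of G \<Longrightarrow> y \<in> ideal_of G \<Longrightarrow> fadd x y \<in> ideal_of G"
| ideal_lmult: "x \<in> ideal_of G \<Longrightarrow> a \<in> Cinf \<Longrightarrow> fmult a x \<in> ideal_of G"
| ideal_rmult: "x \<in> ideal_of G \<Longrightarrow> a \<in> Cinf \<Longrightarrow> fmult x a \<in> ideal_of G"

definition Iset :: "enat \<Rightarrow> ('r::comm_ring_1) fa set" where
  "Iset n = (if n = \<infinity> then {fzero}
     else ideal_of ({Sel k | k. the_enat n \<le> k} \<union> {dgen k | k. the_enat n \<le> k}))"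

text \<open>Cohomology of C_n = (C_infinity / I_n, delta_0) in bidegree (p,q); classes of
  C_n are represented by elements of C_infinity (I_n is homogeneous).\<close>
definition Zc :: "enat \<Rightarrow> int \<Rightarrow> int \<Rightarrow> ('r::comm_ring_1) fa set" where
  "Zc n p q = {x \<in> hom p q. delta0 x \<in> Iset n}"

definition cohom_rel :: "enat \<Rightarrow> int \<Rightarrow> int \<Rightarrow> (('r::comm_ring_1) fa \<times> 'r fa) set" where
  "cohom_rel n p q = {(x, y). x \<in> Zc n p q \<and> y \<in> Zc n p q \<and>
      (\<exists>u \<in> hom p (q - 1). fdiff (fdiff x y) (delta0 u) \<in> Iset n)}"

definition Hcoh :: "enat \<Rightarrow> int \<Rightarrow> int \<Rightarrow> ('r::comm_ring_1) fa set set" where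
  "Hcoh n p q = Zc n p q // cohom_rel n p q"

text \<open>Map on cohomology induced by Phi_{l,n}: the class [x]_l goes to [x]_n.\<close>
definition Hmap :: "enat \<Rightarrow> int \<Rightarrow> int \<Rightarrow> ('r::comm_ring_1) fa set \<Rightarrow> 'r fa set" where
  "Hmap n p q c = cohom_rel n p q `` c"

end

theory Submission
  imports Defs
begin

fun Dr :: "('r::comm_ring_1) fa \<Rightarrow> nat list \<Rightarrow> 'r" where
  "Dr y [] = 0"
| "Dr y [c] = 0"
| "Dr y (c # b # t) = (if 1 \<le> c \<and> 1 \<le> b then (-1)^(c+1) * y ((c+b) # t) else 0)
     + (-1)^(Suc c) * Dr (\<lambda>u. y (c # u)) (b # t)"

lemma Dr_add: "Dr (\<lambda>w. f w + g w) v = Dr f v + Dr g v"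
proof (induction v arbitrary: f g)
  case Nil then show ?case by simp
next
  case (Cons c w) then show ?case by (cases w) (auto simp: algebra_simps)
qed

lemma Dr_scal: "Dr (\<lambda>w. a * f w) v = a * Dr f v"
proof (induction v arbitrary: f)
  case Nil then show ?case by simp
next
  case (Cons c w) then show ?case by (cases w) (auto simp: algebra_simps)
qed

lemma Dr_zero: "Dr (\<lambda>w. 0) v = 0"
  using Dr_scal[of 0 "\<lambda>w. 0" v] by simp

lemma Dr_sum: "Dr (\<lambda>w. \<Sum>u\<in>S. g u w) v = (\<Sum>u\<in>S. Dr (g u) v)"
proof (induction v arbitrary: g)
  case Nil then show ?case by simp
next
  case (Cons c w) then show ?case
    by (cases w) (auto simp: algebra_simps sum_distrib_left sum.distrib sum_subtractf sum_negf)
qed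

lemma dw_Cons: "delta_word (c # u) w =
   (\<Sum>a\<in>{1..<c}. if w = a # (c-a) # u then (-1)^(a+1) else 0)
   + (-1)^(Suc c) * (case w of [] \<Rightarrow> 0 | d # w' \<Rightarrow> if d = c then delta_word u w' else 0)"
proof -
  have sh: "(\<Sum>m<Suc j. Suc ((c#u)!m)) = Suc c + (\<Sum>m<j. Suc (u!m))" for j
    by (subst sum.lessThan_Suc_shift) simp
  define F where "F = (\<lambda>j. \<Sum>a\<in>{1..<(c#u)!j}.
      if w = take j (c#u) @ [a, (c#u)!j - a] @ drop (Suc j) (c#u)
      then (-1::'a) ^ (\<Sum>m<j. Suc ((c#u)!m)) * (-1) ^ (a + 1) else 0)"
  have "delta_word (c # u) w = (\<Sum>j<Suc (length u). F j)"
    unfolding delta_word_def F_def by simp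
  also have "\<dots> = F 0 + (\<Sum>j<length u. F (Suc j))"
    by (rule sum.lessThan_Suc_shift)
  also have "F 0 = (\<Sum>a\<in>{1..<c}. if w = a # (c-a) # u then (-1)^(a+1) else 0)"
    unfolding F_def by (simp cong: if_cong)
  also have "(\<lambda>j. F (Suc j)) = (\<lambda>j. \<Sum>a\<in>{1..<u!j}.
      if w = c # (take j u @ [a, u!j - a] @ drop (Suc j) u)
      then (-1)^(Suc c) * ((-1) ^ (\<Sum>m<j. Suc (u!m)) * (-1) ^ (a + 1)) else 0)"
    unfolding F_def apply (simp only: sh)
    by (rule ext, rule sum.cong) (auto simp: power_add)
  also have "(\<Sum>j<length u. \<Sum>a\<in>{1..<u!j}.
      if w = c # (take j u @ [a, u!j - a] @ drop (Suc j) u)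
      then (-1)^(Suc c) * ((-1) ^ (\<Sum>m<j. Suc (u!m)) * (-1) ^ (a + 1)) else (0::'a))
     = (-1)^(Suc c) * (case w of [] \<Rightarrow> 0 | d # w' \<Rightarrow> if d = c then delta_word u w' else 0)"
  proof (cases w)
    case Nil then show ?thesis by simp
  next
    case (Cons d w')
    show ?thesis
    proof (cases "d = c")
      case True
      then show ?thesis using Cons unfolding delta_word_def
        by (simp add: sum_distrib_left if_distrib cong: if_cong)
    next
      case False
      then show ?thesis using Cons by simp
    qed
  qed
  finally show ?thesis .
qed


lemma dw_Nil: "delta_word [] w = 0"
  unfolding delta_word_def by simp

lemma dw_w_Nil: "delta_word u [] = 0"
  by (cases u) (simp_all add: dw_Cons dw_Nil)

lemma dw_w_single: "delta_word u [c] = 0"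
  by (cases u) (simp_all add: dw_Cons dw_Nil dw_w_Nil)

definition ee :: "nat list \<Rightarrow> ('r::comm_ring_1) fa" where
  "ee u = (\<lambda>v. if v = u then 1 else 0)"

lemma sum_if_eq: "finite A \<Longrightarrow> (\<Sum>i\<in>A. if i = c \<and> P i then f i else 0) = (if c \<in> A \<and> P c then f c else 0)"
proof -
  assume "finite A"
  have "(\<Sum>i\<in>A. if i = c \<and> P i then f i else 0) = (\<Sum>i\<in>A. if i = c then (if P c then f c else 0) else 0)"
    by (rule sum.cong) auto
  also have "\<dots> = (if c \<in> A \<and> P c then f c else 0)"
    using \<open>finite A\<close> by (simp add: sum.delta)
  finally show ?thesis .
qed

lemma Dr_ee: "Dr (ee u) w = (delta_word u w :: 'r::comm_ring_1)"
proof (induction w arbitrary: u)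
  case Nil then show ?case by (simp add: dw_w_Nil)
next
  case (Cons c w)
  show ?case
  proof (cases w)
    case Nil then show ?thesis by (simp add: dw_w_single)
  next
    case (Cons b t)
    show ?thesis
    proof (cases u)
      case Nil
      have "(\<lambda>v. ee [] (c # v)) = (\<lambda>v. 0::'r)" by (auto simp: ee_def)
      then show ?thesis using Nil Cons by (simp add: dw_Nil Dr_zero ee_def)
    next
      case (Cons c' u')
      have e: "(\<lambda>v. ee (c' # u') (c # v)) = (if c = c' then ee u' else (\<lambda>v. 0::'r))"
        by (auto simp: ee_def)
      have IH: "Dr (\<lambda>v. ee (c' # u') (c # v)) (b # t) = (if c = c' then delta_word u' (b # t) else (0::'r))"
        unfolding e using Cons.IH \<open>w = b # t\<close> by (simp add: Dr_zero)
      have s: "(\<Sum>a\<in>{1..<c'}. if c # b # t = a # (c'-a) # u' then (-1)^(a+1) else (0::'r))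
          = (\<Sum>a\<in>{1..<c'}. if a = c \<and> (b = c' - a \<and> t = u') then (-1)^(a+1) else 0)"
        by (rule sum.cong) auto
      have f: "(if 1 \<le> c \<and> 1 \<le> b then (-1)^(c+1) * ee (c' # u') ((c+b) # t) else (0::'r))
          = (if c \<in> {1..<c'} \<and> (b = c' - c \<and> t = u') then (-1)^(c+1) else 0)"
        by (auto simp: ee_def)
      show ?thesis
        using \<open>w = b # t\<close> Cons
        by (simp only: Dr.simps IH dw_Cons s sum_if_eq finite_atLeastLessThan f) simp
    qed
  qed
qed

lemma delta0_Dr: assumes "x \<in> Cinf" shows "delta0 x = Dr x"
proof
  fix w
  let ?S = "{u. x u \<noteq> 0}"
  have fin: "finite ?S" using assms by (simp add: Cinf_def)
  have xe: "(\<lambda>v. \<Sum>u\<in>?S. x u * ee u v) = x"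
  proof
    fix v
    have "(\<Sum>u\<in>?S. x u * ee u v) = (\<Sum>u\<in>?S. if v = u then x u else 0)"
      by (rule sum.cong) (auto simp: ee_def)
    also have "\<dots> = x v" using fin by (simp add: sum.delta')
    finally show "(\<Sum>u\<in>?S. x u * ee u v) = x v" .
  qed
  have "delta0 x w = (\<Sum>u\<in>?S. x u * Dr (ee u) w)"
    unfolding delta0_def by (simp add: Dr_ee)
  also have "\<dots> = (\<Sum>u\<in>?S. Dr (\<lambda>v. x u * ee u v) w)" by (simp add: Dr_scal)
  also have "\<dots> = Dr (\<lambda>v. \<Sum>u\<in>?S. x u * ee u v) w" by (simp add: Dr_sum)
  also have "\<dots> = Dr x w" by (simp only: xe)
  finally show "delta0 x w = Dr x w" .
qed


definition hm :: "('r::comm_ring_1) fa \<Rightarrow> 'r fa" where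
  "hm x = (\<lambda>w. case w of [] \<Rightarrow> 0 | c # v \<Rightarrow> if 2 \<le> c then x (1 # (c - 1) # v) else 0)"

definition Rm :: "('r::comm_ring_1) fa \<Rightarrow> 'r fa" where
  "Rm x = (\<lambda>w. case w of [] \<Rightarrow> 0 | c # v \<Rightarrow> if 2 \<le> c then x ((c - 1) # v) else 0)"

definition pim :: "('r::comm_ring_1) fa \<Rightarrow> 'r fa" where
  "pim x = (\<lambda>w. if w = [] \<or> w = [1] then x w else 0)"

lemma hm_simps[simp]: "hm x [] = 0" "hm x (c # v) = (if 2 \<le> c then x (1 # (c - 1) # v) else 0)"
  by (simp_all add: hm_def)

lemma Rm_simps[simp]: "Rm x [] = 0" "Rm x (c # v) = (if 2 \<le> c then x ((c - 1) # v) else 0)"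
  by (simp_all add: Rm_def)

lemma homotopy:
  fixes x :: "('r::comm_ring_1) fa"
  assumes z: "\<And>w. 0 \<in> set w \<Longrightarrow> x w = 0"
  shows "Dr (hm x) w + hm (Dr x) w = x w - pim x w"
proof (cases w)
  case Nil then show ?thesis by (simp add: pim_def)
next
  case (Cons c v)
  show ?thesis
  proof (cases v)
    case Nil
    show ?thesis
    proof (cases "2 \<le> c")
      case True
      then obtain k where "c = Suc (Suc k)" by (metis add_2_eq_Suc le_Suc_ex)
      then show ?thesis using Cons Nil by (simp add: pim_def)
    next
      case False
      then have "c = 0 \<or> c = 1" by auto
      then show ?thesis using Cons Nil z[of "[0]"] by (auto simp: pim_def)
    qed
  next
    case (Cons b t)
    have c0: "\<not> 2 \<le> c \<Longrightarrow> (\<lambda>u. hm x (c # u)) = (\<lambda>u. 0)" by auto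
    show ?thesis
    proof (cases "2 \<le> c")
      case True
      then obtain k where k: "c = Suc (Suc k)" by (metis add_2_eq_Suc le_Suc_ex)
      have e: "(\<lambda>u. hm x (c # u)) = (\<lambda>u. x (1 # Suc k # u))" using k by auto
      show ?thesis using \<open>w = c # v\<close> Cons k
        by (simp add: e pim_def algebra_simps)
    next
      case False
      then have "c = 0 \<or> c = 1" by auto
      then show ?thesis
      proof
        assume "c = 0"
        then show ?thesis using \<open>w = c # v\<close> Cons c0 False z[of w] by (simp add: Dr_zero pim_def)
      next
        assume c1: "c = 1"
        show ?thesis
        proof (cases "b = 0")
          case True
          then show ?thesis using \<open>w = c # v\<close> Cons c0 False z[of w] c1 by (simp add: Dr_zero pim_def)
        next
          case False
          then show ?thesis using \<open>w = c # v\<close> Cons c0 c1 by (simp add: Dr_zero pim_def)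
        qed
      qed
    qed
  qed
qed

lemma Dr_vanish: "(\<And>v. v \<noteq> [] \<Longrightarrow> v \<noteq> [1] \<Longrightarrow> y v = 0) \<Longrightarrow> Dr y w = 0"
proof (induction w arbitrary: y)
  case Nil then show ?case by simp
next
  case (Cons c w)
  show ?case
  proof (cases w)
    case Nil then show ?thesis by simp
  next
    case (Cons b t)
    have "Dr (\<lambda>u. y (c # u)) (b # t) = 0"
      by (rule Cons.IH[unfolded \<open>w = b # t\<close>]) (simp add: Cons.prems)
    moreover have "1 \<le> c \<and> 1 \<le> b \<Longrightarrow> y ((c+b) # t) = 0" by (rule Cons.prems) auto
    ultimately show ?thesis using Cons by simp
  qed
qed

lemma Dr_pim: "Dr (pim x) w = 0"
  by (rule Dr_vanish) (simp add: pim_def)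


lemma Cinf_zero_letter: "x \<in> Cinf \<Longrightarrow> 0 \<in> set w \<Longrightarrow> x w = 0"
  unfolding Cinf_def by blast

lemma hm_nz: "hm x w \<noteq> 0 \<Longrightarrow> \<exists>c v. w = c # v \<and> 2 \<le> c \<and> x (1 # (c-1) # v) \<noteq> 0"
  by (cases w) (auto split: if_splits)

lemma Rm_nz: "Rm x w \<noteq> 0 \<Longrightarrow> \<exists>c v. w = c # v \<and> 2 \<le> c \<and> x ((c-1) # v) \<noteq> 0"
  by (cases w) (auto split: if_splits)

lemma Cinf_hm: assumes "x \<in> Cinf" shows "hm x \<in> Cinf"
proof -
  let ?f = "\<lambda>u::nat list. case u of a # b # v \<Rightarrow> Suc b # v | _ \<Rightarrow> []"
  have "{w. hm x w \<noteq> 0} \<subseteq> ?f ` {w. x w \<noteq> 0}"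
  proof
    fix w assume "w \<in> {w. hm x w \<noteq> 0}"
    then obtain c v where w: "w = c # v" "2 \<le> c" "x (1 # (c-1) # v) \<noteq> 0"
      using hm_nz[of x w] by auto
    then have "w = ?f (1 # (c-1) # v)" by simp
    then show "w \<in> ?f ` {w. x w \<noteq> 0}" using w by blast
  qed
  moreover have "finite {w. x w \<noteq> 0}" using assms by (simp add: Cinf_def)
  ultimately have "finite {w. hm x w \<noteq> 0}" by (meson finite_imageI finite_subset)
  moreover have "0 \<notin> set w" if nz: "hm x w \<noteq> 0" for w
  proof -
    obtain c v where w: "w = c # v" "2 \<le> c" "x (1 # (c-1) # v) \<noteq> 0"
      using nz hm_nz[of x w] by blast
    then have "0 \<notin> set (1 # (c-1) # v)" using assms by (auto simp: Cinf_def)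
    then show ?thesis using w by auto
  qed
  ultimately show ?thesis by (simp add: Cinf_def)
qed

lemma Cinf_Rm: assumes "x \<in> Cinf" shows "Rm x \<in> Cinf"
proof -
  let ?f = "\<lambda>u::nat list. case u of a # v \<Rightarrow> Suc a # v | _ \<Rightarrow> []"
  have "{w. Rm x w \<noteq> 0} \<subseteq> ?f ` {w. x w \<noteq> 0}"
  proof
    fix w assume "w \<in> {w. Rm x w \<noteq> 0}"
    then obtain c v where w: "w = c # v" "2 \<le> c" "x ((c-1) # v) \<noteq> 0"
      using Rm_nz[of x w] by auto
    then have "w = ?f ((c-1) # v)" by simp
    then show "w \<in> ?f ` {w. x w \<noteq> 0}" using w by blast
  qed
  moreover have "finite {w. x w \<noteq> 0}" using assms by (simp add: Cinf_def)
  ultimately have "finite {w. Rm x w \<noteq> 0}" by (meson finite_imageI finite_subset)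
  moreover have "0 \<notin> set w" if nz: "Rm x w \<noteq> 0" for w
  proof -
    obtain c v where w: "w = c # v" "2 \<le> c" "x ((c-1) # v) \<noteq> 0"
      using nz Rm_nz[of x w] by blast
    then have "0 \<notin> set ((c-1) # v)" using assms by (auto simp: Cinf_def)
    then show ?thesis using w by auto
  qed
  ultimately show ?thesis by (simp add: Cinf_def)
qed

lemma Cinf_sub: assumes "x \<in> Cinf" "\<And>w. y w \<noteq> 0 \<Longrightarrow> x w \<noteq> 0" shows "y \<in> Cinf"
proof -
  have "{w. y w \<noteq> 0} \<subseteq> {w. x w \<noteq> 0}" using assms(2) by blast
  then have "finite {w. y w \<noteq> 0}" using assms(1) finite_subset unfolding Cinf_def by blast
  then show ?thesis using assms unfolding Cinf_def by blast
qed

lemma Cinf_pim: "x \<in> Cinf \<Longrightarrow> pim x \<in> Cinf"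
  by (erule Cinf_sub) (auto simp: pim_def split: if_splits)

lemma Cinf_scal: "x \<in> Cinf \<Longrightarrow> (\<lambda>w. a * x w) \<in> Cinf"
  by (erule Cinf_sub) auto

lemma Cinf_add: assumes "x \<in> Cinf" "y \<in> Cinf" shows "fadd x y \<in> Cinf"
proof -
  have "{w. fadd x y w \<noteq> 0} \<subseteq> {w. x w \<noteq> 0} \<union> {w. y w \<noteq> 0}" by (auto simp: fadd_def)
  then show ?thesis using assms unfolding Cinf_def by (auto intro: finite_subset simp: fadd_def)
qed

lemma Cinf_fzero: "fzero \<in> Cinf" by (simp add: Cinf_def fzero_def)

lemma hom_sub: assumes "x \<in> hom p q" "\<And>w. y w \<noteq> 0 \<Longrightarrow> x w \<noteq> 0" shows "y \<in> hom p q"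
proof -
  have "y \<in> Cinf" using assms Cinf_sub unfolding hom_def by blast
  then show ?thesis using assms unfolding hom_def by blast
qed

lemma hom_pim: "x \<in> hom p q \<Longrightarrow> pim x \<in> hom p q"
  by (erule hom_sub) (auto simp: pim_def split: if_splits)

lemma hom_scal: "x \<in> hom p q \<Longrightarrow> (\<lambda>w. a * x w) \<in> hom p q"
  by (erule hom_sub) auto

lemma hom_zero: "fzero \<in> hom p q"
  unfolding hom_def using Cinf_fzero by (simp add: fzero_def)

lemma hom_add: assumes "x \<in> hom p q" "y \<in> hom p q" shows "fadd x y \<in> hom p q"
proof -
  have "fadd x y \<in> Cinf" using assms Cinf_add unfolding hom_def by blast
  moreover have "bideg w = (p, q)" if "fadd x y w \<noteq> 0" for w
  proof -
    have "x w \<noteq> 0 \<or> y w \<noteq> 0" using that by (auto simp: fadd_def)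
    then show ?thesis using assms unfolding hom_def by blast
  qed
  ultimately show ?thesis unfolding hom_def by blast
qed

lemma hom_hm: assumes "x \<in> hom p q" shows "hm x \<in> hom p (q - 1)"
proof -
  have "hm x \<in> Cinf" using assms Cinf_hm by (auto simp: hom_def)
  moreover have "bideg w = (p, q - 1)" if nz: "hm x w \<noteq> 0" for w
  proof -
    obtain c v where w: "w = c # v" "2 \<le> c" "x (1 # (c-1) # v) \<noteq> 0"
      using nz hm_nz[of x w] by blast
    then have b: "bideg (1 # (c-1) # v) = (p, q)" using assms by (auto simp: hom_def)
    have s: "sum_list (1 # (c-1) # v) = sum_list (c # v)" using w(2) by simp
    have l: "int (length (1 # (c-1) # v)) = int (length (c # v)) + 1" by simp
    show ?thesis using b unfolding w(1) bideg_def s l by simp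
  qed
  ultimately show ?thesis by (simp add: hom_def)
qed


lemma fmult_Nil: "fmult a x [] = a [] * x []"
  by (simp add: fmult_def)

lemma fmult_Cons: "fmult a x (c # v) = a [] * x (c # v) + (\<Sum>i\<le>length v. a (c # take i v) * x (drop i v))"
  unfolding fmult_def by (simp add: sum.atMost_shift lessThan_Suc_atMost del: sum.atMost_Suc)

lemma fmult_single: "fmult a x [c] = a [] * x [c] + a [c] * x []"
  by (simp add: fmult_Cons)

lemma fmult_const: "fmult (\<lambda>w. if w = [] then c else 0) y = (\<lambda>w. c * y w)"
proof
  fix w show "fmult (\<lambda>w. if w = [] then c else 0) y w = c * y w"
    by (cases w) (simp_all add: fmult_Nil fmult_Cons)
qed

lemma Cinf_const: "(\<lambda>w. if w = [] then c else 0) \<in> Cinf"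
proof -
  have "{w. (if w = [] then c else 0) \<noteq> 0} \<subseteq> {[]}" by auto
  then have "finite {w. (if w = [] then c else 0) \<noteq> 0}" by (rule finite_subset) simp
  then show ?thesis by (simp add: Cinf_def)
qed

lemma hm_fmult: "hm (fmult a x) = fadd (fadd (fmult (hm a) x) (\<lambda>w. a [] * hm x w)) (\<lambda>w. a [1] * Rm x w)"
proof
  fix w
  show "hm (fmult a x) w = fadd (fadd (fmult (hm a) x) (\<lambda>w. a [] * hm x w)) (\<lambda>w. a [1] * Rm x w) w"
  proof (cases w)
    case Nil then show ?thesis by (simp add: fadd_def fmult_Nil)
  next
    case (Cons c v)
    show ?thesis
    proof (cases "2 \<le> c")
      case True
      have "fmult a x (1 # (c - 1) # v) = a [] * x (1 # (c-1) # v) + a [1] * x ((c-1) # v)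
           + (\<Sum>i<Suc (length v). a (1 # (c-1) # take i v) * x (drop i v))"
        by (simp add: fmult_Cons sum.atMost_shift del: sum.atMost_Suc sum.lessThan_Suc)
      then show ?thesis using Cons True
        by (simp add: fadd_def fmult_Cons lessThan_Suc_atMost algebra_simps)
    next
      case False
      then show ?thesis using Cons by (simp add: fadd_def fmult_Cons)
    qed
  qed
qed

lemma Rm_fmult: "Rm (fmult a x) = fadd (fmult (Rm a) x) (\<lambda>w. a [] * Rm x w)"
proof
  fix w
  show "Rm (fmult a x) w = fadd (fmult (Rm a) x) (\<lambda>w. a [] * Rm x w) w"
  proof (cases w)
    case Nil then show ?thesis by (simp add: fadd_def fmult_Nil)
  next
    case (Cons c v)
    show ?thesis
    proof (cases "2 \<le> c")
      case True
      then show ?thesis using Cons True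
        by (simp add: fadd_def fmult_Cons algebra_simps)
    next
      case False
      then show ?thesis using Cons by (simp add: fadd_def fmult_Cons)
    qed
  qed
qed

lemma fmult_dgen: "fmult (dgen a) x = (\<lambda>w. case w of [] \<Rightarrow> 0 | c # v \<Rightarrow> if c = a then x v else 0)"
proof
  fix w
  show "fmult (dgen a) x w = (case w of [] \<Rightarrow> 0 | c # v \<Rightarrow> if c = a then x v else 0)"
  proof (cases w)
    case Nil then show ?thesis by (simp add: fmult_Nil dgen_def)
  next
    case (Cons c v)
    have "(\<Sum>i\<le>length v. dgen a (c # take i v) * x (drop i v)) = (if c = a then x v else 0)"
    proof (cases v)
      case Nil then show ?thesis by (simp add: dgen_def)
    next
      case (Cons b t)
      then show ?thesis by (simp add: sum.atMost_shift dgen_def del: sum.atMost_Suc sum.lessThan_Suc)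
    qed
    then show ?thesis using Cons by (simp add: fmult_Cons dgen_def)
  qed
qed

lemma Sel_Cons: "Sel k (c # v) = (if c \<in> {1..<k} \<and> v = [k - c] then (-1)^(c+1) else 0)"
proof -
  have "Sel k (c # v) = (\<Sum>i\<in>{1..<k}. if i = c \<and> v = [k - i] then (-1)^(i+1) else 0)"
    unfolding Sel_def by (rule sum.cong) auto
  then show ?thesis by (simp add: sum_if_eq)
qed

lemma Sel_Nil: "Sel k [] = 0" by (simp add: Sel_def)

lemma hm_dgen: "hm (dgen k) = fzero"
  by (rule ext, case_tac x) (auto simp: dgen_def fzero_def)

lemma Rm_dgen: "1 \<le> k \<Longrightarrow> Rm (dgen k) = dgen (Suc k)"
  by (rule ext, case_tac x) (auto simp: dgen_def)

lemma hm_Sel: "2 \<le> k \<Longrightarrow> hm (Sel k) = dgen k"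
  by (rule ext, case_tac x) (auto simp: dgen_def Sel_Cons Sel_Nil)

lemma Rm_Sel: "1 \<le> k \<Longrightarrow> Rm (Sel k) = fdiff (fmult (dgen 1) (dgen k)) (Sel (Suc k))"
proof
  fix w assume k: "1 \<le> k"
  show "Rm (Sel k) w = fdiff (fmult (dgen 1) (dgen k)) (Sel (Suc k)) w"
  proof (cases w)
    case Nil then show ?thesis by (simp add: fdiff_def fmult_dgen Sel_Nil)
  next
    case (Cons c v)
    then show ?thesis unfolding fdiff_def fmult_dgen using k
      by (cases "2 \<le> c") (auto simp: Sel_Cons dgen_def)
  qed
qed


lemma ideal_scal: "x \<in> ideal_of G \<Longrightarrow> (\<lambda>w. c * x w) \<in> ideal_of G"
  using ideal_lmult[OF _ Cinf_const, of x G c] by (simp add: fmult_const)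

lemma ideal_diff: assumes "x \<in> ideal_of G" "y \<in> ideal_of G" shows "fdiff x y \<in> ideal_of G"
proof -
  have "fdiff x y = fadd x (\<lambda>w. (-1) * y w)" by (simp add: fdiff_def fadd_def fun_eq_iff)
  then show ?thesis using ideal_of.ideal_add[OF assms(1) ideal_scal[OF assms(2), of "-1"]] by simp
qed

lemma ideal_mono: "x \<in> ideal_of G \<Longrightarrow> G \<subseteq> H \<Longrightarrow> x \<in> ideal_of H"
  by (induction rule: ideal_of.induct) (auto intro: ideal_of.intros)

definition GN :: "nat \<Rightarrow> ('r::comm_ring_1) fa set" where
  "GN N = {Sel k | k. N \<le> k} \<union> {dgen k | k. N \<le> k}"

lemma hm_fzero: "hm fzero = fzero" by (rule ext, case_tac x) (auto simp: fzero_def)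
lemma Rm_fzero: "Rm fzero = fzero" by (rule ext, case_tac x) (auto simp: fzero_def)
lemma hm_fadd: "hm (fadd x y) = fadd (hm x) (hm y)" by (rule ext, case_tac xa) (auto simp: fadd_def)
lemma Rm_fadd: "Rm (fadd x y) = fadd (Rm x) (Rm y)" by (rule ext, case_tac xa) (auto simp: fadd_def)

lemma ideal_inv:
  assumes N: "2 \<le> N" and x: "x \<in> ideal_of (GN N)"
  shows "x [] = 0 \<and> x [1] = 0 \<and> hm x \<in> ideal_of (GN N) \<and> Rm x \<in> ideal_of (GN N)"
  using x
proof induction
  case ideal_zero
  then show ?case by (simp add: fzero_def[symmetric] hm_fzero Rm_fzero ideal_of.ideal_zero) (simp add: fzero_def)
next
  case (ideal_gen g)
  then obtain k where k: "N \<le> k" "g = Sel k \<or> g = dgen k" by (auto simp: GN_def)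
  have d: "dgen k \<in> ideal_of (GN N)" "Sel (Suc k) \<in> ideal_of (GN N)" "dgen (Suc k) \<in> ideal_of (GN N)"
    using k(1) by (auto simp: GN_def intro!: ideal_of.ideal_gen)
  have dc: "dgen 1 \<in> Cinf"
  proof -
    have "{w. dgen 1 w \<noteq> (0::'a)} \<subseteq> {[1]}" by (auto simp: dgen_def)
    then have "finite {w. dgen 1 w \<noteq> (0::'a)}" by (rule finite_subset) simp
    then show ?thesis by (auto simp: Cinf_def dgen_def)
  qed
  from k(2) show ?case
  proof
    assume g: "g = Sel k"
    have "Rm (Sel k) \<in> ideal_of (GN N)"
    proof -
      have "1 \<le> k" using N k(1) by simp
      then have "Rm (Sel k) = fdiff (fmult (dgen 1) (dgen k)) (Sel (Suc k))" by (rule Rm_Sel)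
      then show ?thesis using ideal_diff[OF ideal_of.ideal_lmult[OF d(1) dc] d(2)] by metis
    qed
    moreover have "hm (Sel k) \<in> ideal_of (GN N)" using N k(1) d by (simp add: hm_Sel)
    ultimately show ?thesis using g by (simp add: Sel_Nil Sel_Cons)
  next
    assume g: "g = dgen k"
    have "1 \<le> k" using N k(1) by simp
    then have "hm g \<in> ideal_of (GN N) \<and> Rm g \<in> ideal_of (GN N)"
      using g d by (simp add: hm_dgen Rm_dgen ideal_of.ideal_zero)
    moreover have "g [] = 0 \<and> g [1] = 0" using g N k(1) by (simp add: dgen_def)
    ultimately show ?thesis by simp
  qed
next
  case (ideal_add x y)
  then show ?case by (simp add: fadd_def[symmetric] hm_fadd Rm_fadd ideal_of.ideal_add) (simp add: fadd_def)
next
  case (ideal_lmult x a)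
  have h: "hm (fmult a x) \<in> ideal_of (GN N)"
    unfolding hm_fmult using ideal_lmult
    by (intro ideal_of.ideal_add ideal_scal ideal_of.ideal_lmult Cinf_hm) auto
  have r: "Rm (fmult a x) \<in> ideal_of (GN N)"
    unfolding Rm_fmult using ideal_lmult
    by (intro ideal_of.ideal_add ideal_scal ideal_of.ideal_lmult Cinf_Rm) auto
  show ?case using ideal_lmult h r by (simp add: fmult_Nil fmult_single)
next
  case (ideal_rmult x a)
  have e1: "hm (fmult x a) = fmult (hm x) a"
    using ideal_rmult by (simp add: hm_fmult fadd_def)
  have e2: "Rm (fmult x a) = fmult (Rm x) a"
    using ideal_rmult by (simp add: Rm_fmult fadd_def)
  show ?case using ideal_rmult by (simp add: e1 e2 fmult_Nil fmult_single ideal_of.ideal_rmult)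
qed


lemma Iset_fin: "n \<noteq> \<infinity> \<Longrightarrow> Iset n = ideal_of (GN (the_enat n))"
  unfolding Iset_def GN_def by (rule if_not_P)

lemma Iset_inf: "Iset \<infinity> = {fzero}"
  by (simp add: Iset_def)

lemma I_zero: "fzero \<in> Iset n"
  by (cases "n = \<infinity>") (simp_all add: Iset_inf Iset_fin ideal_of.ideal_zero)

lemma I_add: "x \<in> Iset n \<Longrightarrow> y \<in> Iset n \<Longrightarrow> fadd x y \<in> Iset n"
proof (cases "n = \<infinity>")
  case True
  assume "x \<in> Iset n" "y \<in> Iset n"
  then show ?thesis using True by (simp add: Iset_inf) (simp add: fadd_def fzero_def)
next
  case False
  assume "x \<in> Iset n" "y \<in> Iset n"
  then show ?thesis using False by (simp add: Iset_fin ideal_of.ideal_add)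
qed

lemma I_scal: "x \<in> Iset n \<Longrightarrow> (\<lambda>w. c * x w) \<in> Iset n"
proof (cases "n = \<infinity>")
  case True
  assume "x \<in> Iset n"
  then show ?thesis using True by (simp add: Iset_inf) (simp add: fzero_def)
next
  case False
  assume "x \<in> Iset n"
  then show ?thesis using False by (simp add: Iset_fin ideal_scal)
qed

lemma I_diff: "x \<in> Iset n \<Longrightarrow> y \<in> Iset n \<Longrightarrow> fdiff x y \<in> Iset n"
proof -
  assume a: "x \<in> Iset n" "y \<in> Iset n"
  have "fdiff x y = fadd x (\<lambda>w. (-1) * y w)" by (simp add: fdiff_def fadd_def fun_eq_iff)
  then show ?thesis using I_add[OF a(1) I_scal[OF a(2), of "-1"]] by simp
qed

lemma I_good: assumes "2 \<le> n" "x \<in> Iset n" shows "x [] = 0 \<and> x [1] = 0 \<and> hm x \<in> Iset n"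
proof (cases "n = \<infinity>")
  case True then show ?thesis using assms by (simp add: Iset_inf hm_fzero) (simp add: fzero_def)
next
  case False
  then obtain N where N: "n = enat N" by auto
  then have "2 \<le> N" using assms(1) by (simp add: numeral_le_enat_iff)
  then show ?thesis using ideal_inv[of N x] assms(2) N by (simp add: Iset_fin)
qed

lemma I_mono: assumes "n \<le> l" shows "Iset l \<subseteq> Iset n"
proof (cases "l = \<infinity>")
  case True then show ?thesis by (simp add: Iset_inf I_zero)
next
  case False
  then obtain L where L: "l = enat L" by auto
  with assms obtain N where N: "n = enat N" "N \<le> L" by (cases n) auto
  have "GN L \<subseteq> GN N" using N(2) by (auto simp: GN_def)
  then show ?thesis using L N by (auto simp: Iset_fin intro: ideal_mono)
qed

lemma hom_Cinf: "x \<in> hom p q \<Longrightarrow> x \<in> Cinf" by (simp add: hom_def)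

lemma delta0_fzero: "delta0 fzero = fzero"
  by (simp add: delta0_def fzero_def)

lemma equiv_rel: "equiv (Zc n p q) (cohom_rel n p q)"
proof (rule equivI)
  show "cohom_rel n p q \<subseteq> Zc n p q \<times> Zc n p q" by (auto simp: cohom_rel_def)
  show "refl_on (Zc n p q) (cohom_rel n p q)"
    unfolding refl_on_def cohom_rel_def
  proof (intro ballI)
    fix x assume x: "x \<in> Zc n p q"
    have "fdiff (fdiff x x) (delta0 fzero) = fzero"
      by (simp add: delta0_fzero fdiff_def) (simp add: fzero_def)
    then have "\<exists>u\<in>hom p (q - 1). fdiff (fdiff x x) (delta0 u) \<in> Iset n"
      using hom_zero I_zero by metis
    then show "(x, x) \<in> {(x, y). x \<in> Zc n p q \<and> y \<in> Zc n p q \<and>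
      (\<exists>u\<in>hom p (q - 1). fdiff (fdiff x y) (delta0 u) \<in> Iset n)}" using x by simp
  qed
  show "sym (cohom_rel n p q)"
  proof (rule symI)
    fix x y assume "(x, y) \<in> cohom_rel n p q"
    then obtain u where xy: "x \<in> Zc n p q" "y \<in> Zc n p q" "u \<in> hom p (q - 1)"
      "fdiff (fdiff x y) (delta0 u) \<in> Iset n" by (auto simp: cohom_rel_def)
    have u': "(\<lambda>w. (-1) * u w) \<in> hom p (q - 1)" using xy(3) by (rule hom_scal)
    have "fdiff (fdiff y x) (delta0 (\<lambda>w. (-1) * u w)) = (\<lambda>w. (-1) * fdiff (fdiff x y) (delta0 u) w)"
      using delta0_Dr[OF hom_Cinf[OF u']] delta0_Dr[OF hom_Cinf[OF xy(3)]]
      by (simp add: fdiff_def fun_eq_iff Dr_scal[of "-1" u, simplified])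
    then have "fdiff (fdiff y x) (delta0 (\<lambda>w. (-1) * u w)) \<in> Iset n"
      using I_scal[OF xy(4), of "-1"] by simp
    then show "(y, x) \<in> cohom_rel n p q" using xy u' by (auto simp: cohom_rel_def)
  qed
  show "trans (cohom_rel n p q)"
  proof (rule transI)
    fix x y z assume "(x, y) \<in> cohom_rel n p q" "(y, z) \<in> cohom_rel n p q"
    then obtain u v where xy: "x \<in> Zc n p q" "y \<in> Zc n p q" "z \<in> Zc n p q" "u \<in> hom p (q - 1)"
      "fdiff (fdiff x y) (delta0 u) \<in> Iset n" "v \<in> hom p (q - 1)"
      "fdiff (fdiff y z) (delta0 v) \<in> Iset n" by (auto simp: cohom_rel_def)
    have uv: "fadd u v \<in> hom p (q - 1)" using xy by (simp add: hom_add)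
    have "fdiff (fdiff x z) (delta0 (fadd u v)) =
        fadd (fdiff (fdiff x y) (delta0 u)) (fdiff (fdiff y z) (delta0 v))"
      using delta0_Dr[OF hom_Cinf[OF uv]] delta0_Dr[OF hom_Cinf[OF xy(4)]]
        delta0_Dr[OF hom_Cinf[OF xy(6)]]
      by (simp add: fdiff_def fadd_def fun_eq_iff Dr_add[of u v, simplified])
    then have "fdiff (fdiff x z) (delta0 (fadd u v)) \<in> Iset n"
      using I_add[OF xy(5) xy(7)] by simp
    then show "(x, z) \<in> cohom_rel n p q" using xy uv by (auto simp: cohom_rel_def)
  qed
qed


lemma pim_Zc: "x \<in> hom p q \<Longrightarrow> pim x \<in> Zc m p q"
proof -
  assume x: "x \<in> hom p q"
  have "delta0 (pim x) = fzero"
    using delta0_Dr[OF Cinf_pim[OF hom_Cinf[OF x]]] by (simp add: fun_eq_iff Dr_pim fzero_def)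
  then show ?thesis using hom_pim[OF x] I_zero by (simp add: Zc_def)
qed

lemma to_pim: assumes "2 \<le> m" "x \<in> Zc m p q" shows "(x, pim x) \<in> cohom_rel m p q"
proof -
  have xh: "x \<in> hom p q" and dx: "delta0 x \<in> Iset m" using assms(2) by (auto simp: Zc_def)
  have xc: "x \<in> Cinf" using xh by (rule hom_Cinf)
  have hh: "hm x \<in> hom p (q - 1)" using xh by (rule hom_hm)
  have "fdiff (fdiff x (pim x)) (delta0 (hm x)) = hm (delta0 x)"
  proof
    fix w
    have "Dr (hm x) w + hm (Dr x) w = x w - pim x w"
      by (rule homotopy) (rule Cinf_zero_letter[OF xc])
    then show "fdiff (fdiff x (pim x)) (delta0 (hm x)) w = hm (delta0 x) w"
      using delta0_Dr[OF xc] delta0_Dr[OF Cinf_hm[OF xc]]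
      by (simp add: fdiff_def algebra_simps)
  qed
  moreover have "hm (delta0 x) \<in> Iset m" using I_good[OF assms(1) dx] by simp
  ultimately have "\<exists>u\<in>hom p (q - 1). fdiff (fdiff x (pim x)) (delta0 u) \<in> Iset m"
    using hh by metis
  then show ?thesis using assms(2) pim_Zc[OF xh] by (simp add: cohom_rel_def)
qed

lemma rel_pim: assumes "2 \<le> m" "(x, y) \<in> cohom_rel m p q" shows "pim x = pim y"
proof -
  obtain u where u: "u \<in> hom p (q - 1)" "fdiff (fdiff x y) (delta0 u) \<in> Iset m"
    using assms(2) by (auto simp: cohom_rel_def)
  have d: "delta0 u = Dr u" using delta0_Dr[OF hom_Cinf[OF u(1)]] .
  have "fdiff (fdiff x y) (delta0 u) [] = 0 \<and> fdiff (fdiff x y) (delta0 u) [1] = 0"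
    using I_good[OF assms(1) u(2)] by simp
  then have "x [] = y [] \<and> x [1] = y [1]" by (simp add: d fdiff_def)
  then show ?thesis by (auto simp: pim_def fun_eq_iff)
qed

lemma rel_mono: assumes "n \<le> l" shows "cohom_rel l p q \<subseteq> cohom_rel n p q"
  using I_mono[OF assms] unfolding cohom_rel_def Zc_def by blast

theorem mainTheorem11:
  fixes n l :: enat and p q :: int
  assumes "2 \<le> n" and "n \<le> l"
  shows "bij_betw (Hmap n p q :: ('r::comm_ring_1) fa set \<Rightarrow> 'r fa set)
           (Hcoh l p q) (Hcoh n p q)"
proof -
  have l2: "2 \<le> l" using assms by (rule order_trans)
  define rl :: "('r fa \<times> 'r fa) set" where "rl = cohom_rel l p q"
  define rn :: "('r fa \<times> 'r fa) set" where "rn = cohom_rel n p q"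
  define Zl :: "'r fa set" where "Zl = Zc l p q"
  define Zn :: "'r fa set" where "Zn = Zc n p q"
  have eql: "equiv Zl rl" and eqn: "equiv Zn rn" unfolding Zl_def rl_def Zn_def rn_def
    by (rule equiv_rel)+
  have sub: "rl \<subseteq> rn" unfolding rl_def rn_def using assms(2) by (rule rel_mono)
  have Zsub: "Zl \<subseteq> Zn" using I_mono[OF assms(2)] unfolding Zl_def Zn_def Zc_def by blast
  have Hm: "Hmap n p q (rl``{x}) = rn``{x}" if x: "x \<in> Zl" for x
  proof -
    have "rn `` (rl `` {x}) = rn `` {x}"
    proof
      show "rn `` (rl `` {x}) \<subseteq> rn `` {x}"
      proof
        fix z assume "z \<in> rn `` (rl `` {x})"
        then obtain y where "(x, y) \<in> rl" "(y, z) \<in> rn" by blast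
        then have "(x, y) \<in> rn" "(y, z) \<in> rn" using sub by blast+
        then have "(x, z) \<in> rn" using eqn unfolding equiv_def by (meson transD)
        then show "z \<in> rn `` {x}" by blast
      qed
      have "(x, x) \<in> rl" using eql x unfolding equiv_def refl_on_def by blast
      then show "rn `` {x} \<subseteq> rn `` (rl `` {x})" by blast
    qed
    then show ?thesis by (simp add: Hmap_def rn_def)
  qed
  have pl: "(x, pim x) \<in> rl" if "x \<in> Zl" for x
    using to_pim[OF l2] that unfolding rl_def Zl_def by blast
  have pn: "(x, pim x) \<in> rn" if "x \<in> Zn" for x
    using to_pim[OF assms(1)] that unfolding rn_def Zn_def by blast
  have HL: "Hcoh l p q = Zl // rl" by (simp add: Hcoh_def Zl_def rl_def)
  have HN: "Hcoh n p q = Zn // rn" by (simp add: Hcoh_def Zn_def rn_def)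
  show ?thesis unfolding bij_betw_def HL HN
  proof
    show "inj_on (Hmap n p q) (Zl // rl)"
    proof (rule inj_onI)
      fix C1 C2 assume C1: "C1 \<in> Zl // rl" and C2: "C2 \<in> Zl // rl"
        and eq: "Hmap n p q C1 = Hmap n p q C2"
      obtain x where x: "C1 = rl``{x}" "x \<in> Zl" using C1 by (rule quotientE)
      obtain y where y: "C2 = rl``{y}" "y \<in> Zl" using C2 by (rule quotientE)
      have "rn``{x} = rn``{y}" using eq Hm x y by simp
      then have "(x, y) \<in> rn" using eqn x(2) y(2) Zsub by (simp add: eq_equiv_class_iff subsetD)
      then have pe: "pim x = pim y" using rel_pim[OF assms(1)] unfolding rn_def by blast
      have "rl``{x} = rl``{pim x}" using pl[OF x(2)] eql by (simp add: equiv_class_eq_iff)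
      moreover have "rl``{y} = rl``{pim y}" using pl[OF y(2)] eql by (simp add: equiv_class_eq_iff)
      ultimately show "C1 = C2" using x y pe by simp
    qed
    show "Hmap n p q ` (Zl // rl) = Zn // rn"
    proof
      show "Hmap n p q ` (Zl // rl) \<subseteq> Zn // rn"
      proof
        fix D assume "D \<in> Hmap n p q ` (Zl // rl)"
        then obtain C where C: "C \<in> Zl // rl" "D = Hmap n p q C" by blast
        obtain x where x: "C = rl``{x}" "x \<in> Zl" using C(1) by (rule quotientE)
        have "D = rn``{x}" using C(2) x Hm by simp
        then show "D \<in> Zn // rn" using x(2) Zsub by (auto intro: quotientI)
      qed
      show "Zn // rn \<subseteq> Hmap n p q ` (Zl // rl)"
      proof
        fix D assume "D \<in> Zn // rn"
        then obtain x where x: "D = rn``{x}" "x \<in> Zn" by (rule quotientE)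
        have xh: "x \<in> hom p q" using x(2) by (simp add: Zn_def Zc_def)
        have pz: "pim x \<in> Zl" using pim_Zc[OF xh] by (simp add: Zl_def)
        have "D = rn``{pim x}" using pn[OF x(2)] eqn x by (simp add: equiv_class_eq_iff)
        also have "\<dots> = Hmap n p q (rl``{pim x})" using Hm[OF pz] by simp
        finally show "D \<in> Hmap n p q ` (Zl // rl)" using pz by (auto intro: quotientI)
      qed
    qed
  qed
qed

end
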